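(* Let $G$ be a nice graph, $V_4$ the set of vertices of degree at least four in $G$, $\mathcal{P}$ a path partition of $G$, and $\mathcal{P}_4\subseteq\mathcal{P}$ the subfamily of paths that visit at least one vertex of $V_4$. Then $\mathcal{P}_4$ admits a terminal collection of size at most $16\cdot\mathsf{high}(G)$, where $\mathsf{high}(G)=\sum_{v\in V_4}\deg_G(v)$.
   Context: All graphs are finite, simple and undirected; subcubic means maximum degree at most $3$. A path partition of $G$ is a collection of pairwise edge-disjoint paths whose edge sets together cover $E(G)$. A pan cycle of $G$ is a cycle containing a unique vertex of degree $3$ in $G$, all other vertices of it having degree $2$ in $G$; a bull cycle is a cycle containing exactly two vertices of degree $3$ in $G$, all others having degree $2$ in $G$. $G$ is nice if it is connected, not subcubic, has no pan cycles, and all its bull cycles are triangles. $N_G[S]$ denotes the closed neighbourhood of $S$. For a family $\mathcal{Q}$ of edge-disjoint paths in $G$, a set $U\subseteq V(G)$ is a terminal collection for $\mathcal{Q}$ if (1) $N_G[V_4]\subseteq U$; (2) both endpoints of every $P\in\mathcal{Q}$ belong to $U$; (3) for all $u,v\in U$, if two distinct paths $P_1,P_2\in\mathcal{Q}$ both visit $u$ and $v$, then at least one of $P_1,P_2$ visits some other vertex $w\in U$ between $u$ and $v$. *)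

theory Defs
  imports Main
begin

definition graph :: "'a set \<Rightarrow> 'a set set \<Rightarrow> bool" where
  "graph V E \<longleftrightarrow> finite V \<and> (\<forall>e\<in>E. e \<subseteq> V \<and> card e = 2)"

definition deg :: "'a set set \<Rightarrow> 'a \<Rightarrow> nat" where
  "deg E v = card {e\<in>E. v \<in> e}"

definition adj :: "'a set set \<Rightarrow> 'a \<Rightarrow> 'a \<Rightarrow> bool" where
  "adj E u v \<longleftrightarrow> {u, v} \<in> E"

definition connected_graph :: "'a set \<Rightarrow> 'a set set \<Rightarrow> bool" where
  "connected_graph V E \<longleftrightarrow> (\<forall>u\<in>V. \<forall>v\<in>V. (adj E)\<^sup>*\<^sup>* u v)"

definition subcubic :: "'a set \<Rightarrow> 'a set set \<Rightarrow> bool" where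
  "subcubic V E \<longleftrightarrow> (\<forall>v\<in>V. deg E v \<le> 3)"

definition is_cycle :: "'a set \<Rightarrow> 'a set set \<Rightarrow> 'a list \<Rightarrow> bool" where
  "is_cycle V E c \<longleftrightarrow> length c \<ge> 3 \<and> distinct c \<and> set c \<subseteq> V \<and>
     (\<forall>i < length c - 1. {c!i, c!(i+1)} \<in> E) \<and> {last c, hd c} \<in> E"

definition pan_cycle :: "'a set \<Rightarrow> 'a set set \<Rightarrow> 'a list \<Rightarrow> bool" where
  "pan_cycle V E c \<longleftrightarrow> is_cycle V E c \<and> card {v\<in>set c. deg E v = 3} = 1 \<and>
     (\<forall>v\<in>set c. deg E v = 2 \<or> deg E v = 3)"

definition bull_cycle :: "'a set \<Rightarrow> 'a set set \<Rightarrow> 'a list \<Rightarrow> bool" where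
  "bull_cycle V E c \<longleftrightarrow> is_cycle V E c \<and> card {v\<in>set c. deg E v = 3} = 2 \<and>
     (\<forall>v\<in>set c. deg E v = 2 \<or> deg E v = 3)"

definition nice :: "'a set \<Rightarrow> 'a set set \<Rightarrow> bool" where
  "nice V E \<longleftrightarrow> connected_graph V E \<and> \<not> subcubic V E \<and>
     (\<forall>c. \<not> pan_cycle V E c) \<and> (\<forall>c. bull_cycle V E c \<longrightarrow> length c = 3)"

definition is_path :: "'a set \<Rightarrow> 'a set set \<Rightarrow> 'a list \<Rightarrow> bool" where
  "is_path V E p \<longleftrightarrow> length p \<ge> 2 \<and> distinct p \<and> set p \<subseteq> V \<and>
     (\<forall>i < length p - 1. {p!i, p!(i+1)} \<in> E)"

definition path_edges :: "'a list \<Rightarrow> 'a set set" where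
  "path_edges p = {{p!i, p!(i+1)} | i. i < length p - 1}"

definition path_partition :: "'a set \<Rightarrow> 'a set set \<Rightarrow> 'a list set \<Rightarrow> bool" where
  "path_partition V E PP \<longleftrightarrow> (\<forall>p\<in>PP. is_path V E p) \<and>
     (\<forall>p\<in>PP. \<forall>q\<in>PP. p \<noteq> q \<longrightarrow> path_edges p \<inter> path_edges q = {}) \<and>
     \<Union>(path_edges ` PP) = E"

definition V4 :: "'a set \<Rightarrow> 'a set set \<Rightarrow> 'a set" where
  "V4 V E = {v\<in>V. deg E v \<ge> 4}"

definition closed_nbhd :: "'a set \<Rightarrow> 'a set set \<Rightarrow> 'a set \<Rightarrow> 'a set" where
  "closed_nbhd V E S = S \<union> {v\<in>V. \<exists>u\<in>S. {u, v} \<in> E}"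

definition high :: "'a set \<Rightarrow> 'a set set \<Rightarrow> nat" where
  "high V E = (\<Sum>v\<in>V4 V E. deg E v)"

definition between :: "'a list \<Rightarrow> 'a \<Rightarrow> 'a \<Rightarrow> 'a \<Rightarrow> bool" where
  "between p u v w \<longleftrightarrow> (\<exists>i j k. i < length p \<and> j < length p \<and> k < length p \<and>
     p!i = u \<and> p!j = v \<and> p!k = w \<and> min i j < k \<and> k < max i j)"

definition terminal_collection :: "'a set \<Rightarrow> 'a set set \<Rightarrow> 'a list set \<Rightarrow> 'a set \<Rightarrow> bool" where
  "terminal_collection V E Q U \<longleftrightarrow> U \<subseteq> V \<and>
     closed_nbhd V E (V4 V E) \<subseteq> U \<and>
     (\<forall>p\<in>Q. hd p \<in> U \<and> last p \<in> U) \<and>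
     (\<forall>u\<in>U. \<forall>v\<in>U. u \<noteq> v \<longrightarrow> (\<forall>p1\<in>Q. \<forall>p2\<in>Q.
        p1 \<noteq> p2 \<and> u \<in> set p1 \<and> v \<in> set p1 \<and> u \<in> set p2 \<and> v \<in> set p2 \<longrightarrow>
        (\<exists>w\<in>U. w \<noteq> u \<and> w \<noteq> v \<and> (between p1 u v w \<or> between p2 u v w))))"

end

theory Submission
  imports Defs
begin

lemma pe_mem: "Suc i < length p \<Longrightarrow> {p!i, p!(i+1)} \<in> path_edges p"
  unfolding path_edges_def by (rule CollectI, rule exI[of _ i]) auto

lemma pe_sub: "is_path V E p \<Longrightarrow> path_edges p \<subseteq> E"
  unfolding path_edges_def is_path_def by auto

lemma finE: "graph V E \<Longrightarrow> finite E"
  unfolding graph_def by (rule finite_subset[of E "Pow V"]) auto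

lemma mid_edges:
  assumes P: "is_path V E p" and x: "x \<in> set p" "x \<noteq> hd p" "x \<noteq> last p"
  shows "\<exists>a b. a \<noteq> b \<and> {a,x} \<in> path_edges p \<and> {x,b} \<in> path_edges p"
proof -
  from x obtain i where i: "i < length p" "p!i = x" by (auto simp: in_set_conv_nth)
  have ne: "p \<noteq> []" using i by auto
  have "i \<noteq> 0"
  proof
    assume "i = 0" then show False using i x ne by (simp add: hd_conv_nth)
  qed
  moreover have "i \<noteq> length p - 1" using i x ne by (auto simp: last_conv_nth)
  ultimately have i0: "0 < i" "Suc i < length p" using i by auto
  have d: "distinct p" using P by (simp add: is_path_def)
  have ab: "p!(i-1) \<noteq> p!(i+1)" using d i0 by (simp add: nth_eq_iff_index_eq)
  have e1: "{p!(i-1), p!(i-1+1)} \<in> path_edges p" using i0 by (intro pe_mem) auto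
  have e2: "{p!i, p!(i+1)} \<in> path_edges p" using i0 by (intro pe_mem) auto
  have "i - 1 + 1 = i" using i0 by simp
  then have e1': "{p!(i-1), x} \<in> path_edges p" using e1 i(2) by simp
  have e2': "{x, p!(i+1)} \<in> path_edges p" using e2 i(2) by simp
  show ?thesis using e1' e2' ab by blast
qed

lemma disj_ne: "a \<in> A \<Longrightarrow> b \<in> B \<Longrightarrow> A \<inter> B = {} \<Longrightarrow> a \<noteq> b"
  by blast

lemma card4: "a \<noteq> b \<Longrightarrow> a \<noteq> c \<Longrightarrow> a \<noteq> d \<Longrightarrow> b \<noteq> c \<Longrightarrow> b \<noteq> d \<Longrightarrow> c \<noteq> d \<Longrightarrow> card {a,b,c,d} = 4"
  by simp

lemma interior_deg4:
  assumes G: "graph V E" and pp: "path_partition V E PP" and p1: "p1 \<in> PP" and p2: "p2 \<in> PP"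
    and ne: "p1 \<noteq> p2" and x1: "x \<in> set p1" and x2: "x \<in> set p2"
    and h1: "x \<noteq> hd p1" and l1: "x \<noteq> last p1" and h2: "x \<noteq> hd p2" and l2: "x \<noteq> last p2"
  shows "4 \<le> deg E x"
proof -
  have P1: "is_path V E p1" and P2: "is_path V E p2"
    and dj: "path_edges p1 \<inter> path_edges p2 = {}"
    using pp p1 p2 ne unfolding path_partition_def by blast+
  obtain a b where ab: "a \<noteq> b" "{a,x} \<in> path_edges p1" "{x,b} \<in> path_edges p1"
    using mid_edges[OF P1 x1 h1 l1] by blast
  obtain c d where cd: "c \<noteq> d" "{c,x} \<in> path_edges p2" "{x,d} \<in> path_edges p2"
    using mid_edges[OF P2 x2 h2 l2] by blast
  have n12: "{a,x} \<noteq> {x,b}" using ab(1) by (auto simp add: doubleton_eq_iff)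
  have n34: "{c,x} \<noteq> {x,d}" using cd(1) by (auto simp add: doubleton_eq_iff)
  have c4: "card {{a,x},{x,b},{c,x},{x,d}} = 4"
    by (rule card4[OF n12 disj_ne[OF ab(2) cd(2) dj] disj_ne[OF ab(2) cd(3) dj]
        disj_ne[OF ab(3) cd(2) dj] disj_ne[OF ab(3) cd(3) dj] n34])
  have sub: "{{a,x},{x,b},{c,x},{x,d}} \<subseteq> {e\<in>E. x \<in> e}"
    using ab cd pe_sub[OF P1] pe_sub[OF P2] by auto
  have "finite {e\<in>E. x \<in> e}" using finE[OF G] by simp
  from card_mono[OF this sub] c4 show ?thesis by (simp add: deg_def)
qed

lemma nb_card:
  assumes B: "finite B" and F: "finite E"
  shows "card (closed_nbhd V E B) \<le> (\<Sum>x\<in>B. 1 + deg E x)"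
proof -
  have sub: "closed_nbhd V E B \<subseteq> (\<Union>x\<in>B. insert x {w. {x,w} \<in> E})"
    by (auto simp: closed_nbhd_def)
  have fc: "finite {w. {x,w} \<in> E} \<and> card {w. {x,w} \<in> E} \<le> deg E x" for x
  proof -
    have inj: "inj_on (\<lambda>w. {x,w}) {w. {x,w} \<in> E}"
      by (auto simp: inj_on_def doubleton_eq_iff)
    have im: "(\<lambda>w. {x,w}) ` {w. {x,w} \<in> E} \<subseteq> {e\<in>E. x \<in> e}" by auto
    have fe: "finite {e\<in>E. x \<in> e}" using F by simp
    have "finite {w. {x,w} \<in> E}"
      using finite_imageD[OF finite_subset[OF im fe] inj] .
    moreover have "card {w. {x,w} \<in> E} \<le> deg E x"
      unfolding deg_def using card_inj_on_le[OF inj im fe] .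
    ultimately show ?thesis by simp
  qed
  have c: "card (insert x {w. {x,w} \<in> E}) \<le> 1 + deg E x" for x
    using fc[of x] by (simp add: card_insert_if)
  have fu: "finite (\<Union>x\<in>B. insert x {w. {x,w} \<in> E})" using B fc by auto
  have "card (closed_nbhd V E B) \<le> card (\<Union>x\<in>B. insert x {w. {x,w} \<in> E})"
    by (rule card_mono[OF fu sub])
  also have "\<dots> \<le> (\<Sum>x\<in>B. card (insert x {w. {x,w} \<in> E}))"
    by (rule card_UN_le[OF B])
  also have "\<dots> \<le> (\<Sum>x\<in>B. 1 + deg E x)"
    by (rule sum_mono) (rule c)
  finally show ?thesis .
qed

theorem lemma13:
  fixes V :: "'a set" and E :: "'a set set" and PP :: "'a list set"
  assumes "graph V E" and "nice V E" and "path_partition V E PP"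
  shows "\<exists>U. terminal_collection V E {p\<in>PP. \<exists>v\<in>V4 V E. v \<in> set p} U \<and>
             card U \<le> 16 * high V E"
proof -
  note G = assms(1) and pp = assms(3)
  define Q where "Q = {p\<in>PP. \<exists>v\<in>V4 V E. v \<in> set p}"
  define Ends where "Ends = hd ` Q \<union> last ` Q"
  define B where "B = V4 V E \<union> Ends"
  define U where "U = closed_nbhd V E B"
  have FE: "finite E" using finE[OF G] .
  have FV: "finite V" using G by (simp add: graph_def)
  have isp: "is_path V E p" if "p \<in> PP" for p using pp that by (simp add: path_partition_def)
  have dj: "path_edges p \<inter> path_edges q = {}" if "p \<in> PP" "q \<in> PP" "p \<noteq> q" for p q
    using pp that unfolding path_partition_def by blast
  have V4V: "V4 V E \<subseteq> V" by (auto simp: V4_def)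
  have EndsV: "Ends \<subseteq> V"
  proof
    fix x assume "x \<in> Ends"
    then obtain p where p: "p \<in> PP" "x = hd p \<or> x = last p" by (auto simp: Ends_def Q_def)
    have "p \<noteq> []" "set p \<subseteq> V" using isp[OF p(1)] by (auto simp: is_path_def)
    then show "x \<in> V" using p(2) by auto
  qed
  have BV: "B \<subseteq> V" using V4V EndsV by (auto simp: B_def)
  define S where "S = {e\<in>E. \<exists>v\<in>V4 V E. v \<in> e}"
  have FS: "finite S" using FE by (simp add: S_def)
  have cS: "card S \<le> high V E"
  proof -
    have "S = (\<Union>v\<in>V4 V E. {e\<in>E. v \<in> e})" by (auto simp: S_def)
    moreover have "finite (V4 V E)" using finite_subset[OF V4V FV] .
    ultimately have "card S \<le> (\<Sum>v\<in>V4 V E. card {e\<in>E. v \<in> e})"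
      using card_UN_le by metis
    then show ?thesis by (simp add: high_def deg_def)
  qed
  have ex: "\<exists>e. e \<in> path_edges p \<and> e \<in> S" if "p \<in> Q" for p
  proof -
    from that obtain v where p: "p \<in> PP" "v \<in> V4 V E" "v \<in> set p" by (auto simp: Q_def)
    have P: "is_path V E p" using isp[OF p(1)] .
    have len: "2 \<le> length p" using P by (simp add: is_path_def)
    from p(3) obtain k where k: "k < length p" "p!k = v" by (auto simp: in_set_conv_nth)
    show ?thesis
    proof (cases "Suc k < length p")
      case True
      have "{p!k, p!(k+1)} \<in> path_edges p" using pe_mem[OF True] .
      moreover have "{p!k, p!(k+1)} \<in> S" using calculation pe_sub[OF P] p k by (auto simp: S_def)
      ultimately show ?thesis by blast
    next
      case False
      have kk: "k - 1 + 1 = k" "Suc (k-1) < length p" using False k len by auto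
      have "{p!(k-1), p!(k-1+1)} \<in> path_edges p" using pe_mem[OF kk(2)] .
      moreover have "{p!(k-1), p!(k-1+1)} \<in> S" using calculation pe_sub[OF P] p k kk(1)
        by (auto simp: S_def)
      ultimately show ?thesis by blast
    qed
  qed
  define f where "f p = (SOME e. e \<in> path_edges p \<and> e \<in> S)" for p
  have fS: "f p \<in> path_edges p \<and> f p \<in> S" if "p \<in> Q" for p
    unfolding f_def using someI_ex[OF ex[OF that]] .
  have inj: "inj_on f Q"
  proof (rule inj_onI)
    fix p q assume pq: "p \<in> Q" "q \<in> Q" "f p = f q"
    show "p = q"
    proof (rule ccontr)
      assume "p \<noteq> q"
      then have "path_edges p \<inter> path_edges q = {}" using dj pq by (auto simp: Q_def)
      then show False using fS[OF pq(1)] fS[OF pq(2)] pq(3) by auto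
    qed
  qed
  have im: "f ` Q \<subseteq> S" using fS by auto
  have FQ: "finite Q" using finite_imageD[OF finite_subset[OF im FS] inj] .
  have cQ: "card Q \<le> high V E" using card_inj_on_le[OF inj im FS] cS by simp
  have cEnds: "card Ends \<le> 2 * card Q"
  proof -
    have "card Ends \<le> card (hd ` Q) + card (last ` Q)" unfolding Ends_def by (rule card_Un_le)
    also have "\<dots> \<le> card Q + card Q" using card_image_le[OF FQ] add_mono by metis
    finally show ?thesis by simp
  qed
  have FEnds: "finite Ends" using FQ by (simp add: Ends_def)
  define D where "D = Ends - V4 V E"
  have FV4: "finite (V4 V E)" using finite_subset[OF V4V FV] .
  have FD: "finite D" using FEnds by (simp add: D_def)
  have BD: "B = V4 V E \<union> D" "V4 V E \<inter> D = {}" by (auto simp: B_def D_def)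
  have FB: "finite B" using FV4 FEnds by (simp add: B_def)
  have s1: "(\<Sum>x\<in>V4 V E. 1 + deg E x) \<le> (\<Sum>x\<in>V4 V E. 2 * deg E x)"
    by (rule sum_mono) (auto simp: V4_def)
  have s1': "(\<Sum>x\<in>V4 V E. 2 * deg E x) = 2 * high V E"
    by (simp add: high_def sum_distrib_left)
  have s2: "(\<Sum>x\<in>D. 1 + deg E x) \<le> (\<Sum>x\<in>D. 4)"
  proof (rule sum_mono)
    fix x assume "x \<in> D"
    then have "x \<in> V" "x \<notin> V4 V E" using EndsV by (auto simp: D_def)
    then show "1 + deg E x \<le> 4" by (auto simp: V4_def)
  qed
  have cD: "card D \<le> card Ends" unfolding D_def using FEnds by (simp add: card_mono)
  have "card U \<le> (\<Sum>x\<in>B. 1 + deg E x)" unfolding U_def by (rule nb_card[OF FB FE])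
  also have "\<dots> = (\<Sum>x\<in>V4 V E. 1 + deg E x) + (\<Sum>x\<in>D. 1 + deg E x)"
    unfolding BD(1) by (rule sum.union_disjoint[OF FV4 FD BD(2)])
  also have "\<dots> \<le> 2 * high V E + 4 * card D" using s1 s1' s2 by simp
  also have "\<dots> \<le> 16 * high V E" using cD cEnds cQ by simp
  finally have card: "card U \<le> 16 * high V E" .
  have UV: "U \<subseteq> V" using BV by (auto simp: U_def closed_nbhd_def)
  have BU: "B \<subseteq> U" by (auto simp: U_def closed_nbhd_def)
  have c2: "closed_nbhd V E (V4 V E) \<subseteq> U" by (auto simp: U_def closed_nbhd_def B_def)
  have c3: "\<forall>p\<in>Q. hd p \<in> U \<and> last p \<in> U" using BU by (auto simp: B_def Ends_def)
  have key: "x \<in> B" if "p1 \<in> Q" "p2 \<in> Q" "p1 \<noteq> p2" "x \<in> set p1" "x \<in> set p2" for x p1 p2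
  proof (rule ccontr)
    assume nb: "x \<notin> B"
    then have "x \<noteq> hd p1" "x \<noteq> last p1" "x \<noteq> hd p2" "x \<noteq> last p2"
      using that by (auto simp: B_def Ends_def)
    then have "4 \<le> deg E x" using interior_deg4[OF G pp _ _ that(3-5)] that(1,2)
      by (auto simp: Q_def)
    moreover have "x \<in> V" using isp that(1,4) by (auto simp: Q_def is_path_def)
    ultimately show False using nb by (auto simp: B_def V4_def)
  qed
  have onepath: "(\<exists>w\<in>U. w \<noteq> u \<and> w \<noteq> v \<and> between p u v w) \<or> {u,v} \<in> path_edges p"
    if H: "p \<in> Q" "u \<in> B" "v \<in> B" "u \<in> set p" "v \<in> set p" "u \<noteq> v" for p u v
  proof -
    have P: "is_path V E p" using isp H(1) by (auto simp: Q_def)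
    have d: "distinct p" using P by (simp add: is_path_def)
    obtain i where i: "i < length p" "p!i = u" using H(4) by (auto simp: in_set_conv_nth)
    obtain j where j: "j < length p" "p!j = v" using H(5) by (auto simp: in_set_conv_nth)
    have ij: "i \<noteq> j" using i j H(6) by auto
    define m where "m = min i j"
    have pm: "p!m \<in> B" using H(2,3) i j by (auto simp: m_def min_def)
    show ?thesis
    proof (cases "Suc m < max i j")
      case True
      define w where "w = p!(m+1)"
      have sl: "Suc m < length p" using True i j by auto
      have "{p!m, w} \<in> E" using pe_mem[OF sl] pe_sub[OF P] by (auto simp: w_def)
      moreover have "w \<in> V" using P sl by (auto simp: is_path_def w_def)
      ultimately have wU: "w \<in> U" using pm by (auto simp: U_def closed_nbhd_def)
      have "w \<noteq> u" "w \<noteq> v" using d i j sl True unfolding w_def m_def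
        by (auto simp: nth_eq_iff_index_eq)
      moreover have "between p u v w" unfolding between_def
        using i j sl True by (intro exI[of _ i] exI[of _ j] exI[of _ "m+1"]) (auto simp: m_def w_def)
      ultimately show ?thesis using wU by blast
    next
      case False
      have sl: "Suc m < length p" using ij i j by (auto simp: m_def)
      have "max i j = m + 1" using False ij by (auto simp: m_def)
      then have "{p!m, p!(m+1)} = {u,v}" using i j by (auto simp: m_def min_def max_def split: if_splits)
      then show ?thesis using pe_mem[OF sl] by simp
    qed
  qed
  have c4: "\<forall>u\<in>U. \<forall>v\<in>U. u \<noteq> v \<longrightarrow> (\<forall>p1\<in>Q. \<forall>p2\<in>Q.
        p1 \<noteq> p2 \<and> u \<in> set p1 \<and> v \<in> set p1 \<and> u \<in> set p2 \<and> v \<in> set p2 \<longrightarrow>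
        (\<exists>w\<in>U. w \<noteq> u \<and> w \<noteq> v \<and> (between p1 u v w \<or> between p2 u v w)))"
  proof (intro ballI impI)
    fix u v p1 p2 assume h: "u \<in> U" "v \<in> U" "u \<noteq> v" "p1 \<in> Q" "p2 \<in> Q"
      "p1 \<noteq> p2 \<and> u \<in> set p1 \<and> v \<in> set p1 \<and> u \<in> set p2 \<and> v \<in> set p2"
    have uB: "u \<in> B" "v \<in> B"
      using key[OF h(4) h(5), of u] key[OF h(4) h(5), of v] h(6) by simp_all
    have dj12: "path_edges p1 \<inter> path_edges p2 = {}" using dj h by (auto simp: Q_def)
    have o1: "(\<exists>w\<in>U. w \<noteq> u \<and> w \<noteq> v \<and> between p1 u v w) \<or> {u,v} \<in> path_edges p1"
      using onepath[OF h(4) uB] h by simp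
    have o2: "(\<exists>w\<in>U. w \<noteq> u \<and> w \<noteq> v \<and> between p2 u v w) \<or> {u,v} \<in> path_edges p2"
      using onepath[OF h(5) uB] h by simp
    show "\<exists>w\<in>U. w \<noteq> u \<and> w \<noteq> v \<and> (between p1 u v w \<or> between p2 u v w)"
    proof (cases "{u,v} \<in> path_edges p1 \<and> {u,v} \<in> path_edges p2")
      case True then show ?thesis using dj12 by blast
    next
      case False then show ?thesis using o1 o2 by blast
    qed
  qed
  have "terminal_collection V E Q U"
    unfolding terminal_collection_def using UV c2 c3 c4 by blast
  then show ?thesis using card unfolding Q_def by blast
qed

end
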